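(* Let $T$ be a triangle which is not of type $(108^\circ,36^\circ,36^\circ)$, $(72^\circ,72^\circ,36^\circ)$ or $(120^\circ,30^\circ,30^\circ)$. Then the tight 5-cycle $C_5$ with vertex set $[5]$ and edges $123,234,345,145,125$ is forbidden for $T$.
   Context: A 3-graph is a 3-uniform hypergraph; $G$ is $F$-free if it has no (not necessarily induced) subhypergraph isomorphic to $F$. A triangle is of type $(\alpha,\beta,\gamma)$ if $\alpha\ge\beta\ge\gamma$ are its interior angles in degrees. For a triangle $T$ with side lengths $a,b,c$ and $\varepsilon>0$, with $\varepsilon'=\varepsilon\min\{a,b,c\}$, a triangle $A'B'C'$ is $\varepsilon$-congruent to $T$ if there are $A,B,C\in\mathbb{R}^2$ with $ABC$ congruent to $T$ and $A',B',C'$ within distance $\varepsilon'$ of $A,B,C$ respectively. For finite $P\subseteq\mathbb{R}^2$, $\mathcal{H}(T,P,\varepsilon)$ is the 3-graph on $P$ whose edges are triples forming triangles $\varepsilon$-congruent to $T$. A 3-graph $H$ is forbidden for $T$ if there exists $\varepsilon>0$ such that for every $P\subseteq\mathbb{R}^2$ with $|P|=|V(H)|$, $\mathcal{H}(T,P,\varepsilon)$ is $H$-free. *)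

theory Defs
  imports "HOL-Analysis.Analysis" "HOL-Library.Multiset"
begin

type_synonym pt = "real ^ 2"

type_synonym triangle = "pt \<times> pt \<times> pt"

definition is_triangle :: "triangle \<Rightarrow> bool" where
  "is_triangle T = (case T of (A, B, C) \<Rightarrow> \<not> collinear {A, B, C})"

definition angle_deg :: "pt \<Rightarrow> pt \<Rightarrow> pt \<Rightarrow> real" where
  "angle_deg A B C =
     arccos (((A - B) \<bullet> (C - B)) / (norm (A - B) * norm (C - B))) * 180 / pi"

definition tri_type :: "triangle \<Rightarrow> real \<Rightarrow> real \<Rightarrow> real \<Rightarrow> bool" where
  "tri_type T \<alpha> \<beta> \<gamma> = (case T of (A, B, C) \<Rightarrow>
     {# angle_deg C A B, angle_deg A B C, angle_deg B C A #} = {# \<alpha>, \<beta>, \<gamma> #})"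

definition min_side :: "triangle \<Rightarrow> real" where
  "min_side T = (case T of (A, B, C) \<Rightarrow> min (dist B C) (min (dist C A) (dist A B)))"

definition congruent :: "pt \<Rightarrow> pt \<Rightarrow> pt \<Rightarrow> triangle \<Rightarrow> bool" where
  "congruent A B C T = (case T of (X, Y, Z) \<Rightarrow>
     \<exists>f :: pt \<Rightarrow> pt. (\<forall>u v. dist (f u) (f v) = dist u v) \<and> {f X, f Y, f Z} = {A, B, C})"

definition eps_congruent :: "triangle \<Rightarrow> real \<Rightarrow> pt \<Rightarrow> pt \<Rightarrow> pt \<Rightarrow> bool" where
  "eps_congruent T \<epsilon> A' B' C' =
     (\<exists>A B C. congruent A B C T \<and>
        dist A' A \<le> \<epsilon> * min_side T \<and> dist B' B \<le> \<epsilon> * min_side T \<and>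
        dist C' C \<le> \<epsilon> * min_side T)"

definition HTP :: "triangle \<Rightarrow> pt set \<Rightarrow> real \<Rightarrow> pt set set" where
  "HTP T P \<epsilon> = {e. e \<subseteq> P \<and> card e = 3 \<and>
      (\<exists>x y z. e = {x, y, z} \<and> eps_congruent T \<epsilon> x y z)}"

definition contains_copy :: "'a set \<Rightarrow> 'a set set \<Rightarrow> 'b set \<Rightarrow> 'b set set \<Rightarrow> bool" where
  "contains_copy VH EH VG EG =
     (\<exists>f. inj_on f VH \<and> f ` VH \<subseteq> VG \<and> (\<forall>e\<in>EH. f ` e \<in> EG))"

definition forbidden_for :: "'a set \<Rightarrow> 'a set set \<Rightarrow> triangle \<Rightarrow> bool" where
  "forbidden_for VH EH T =
     (\<exists>\<epsilon>>0. \<forall>P :: pt set. finite P \<and> card P = card VH \<longrightarrow>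
        \<not> contains_copy VH EH P (HTP T P \<epsilon>))"

definition C5_vertices :: "nat set" where
  "C5_vertices = {1, 2, 3, 4, 5}"

definition C5_edges :: "nat set set" where
  "C5_edges = {{1,2,3}, {2,3,4}, {3,4,5}, {1,4,5}, {1,2,5}}"

end

theory Submission
  imports Defs
begin

definition cm :: "real \<Rightarrow> real \<Rightarrow> real \<Rightarrow> real \<Rightarrow> real \<Rightarrow> real \<Rightarrow> real" where
"cm d01 d02 d03 d12 d13 d23 = (-2) * d12*d13*d23 + (2) * d03*d12*d23 + (2) * d03*d12*d13 + (-2) * d03*d12^2 + (-2) * d03^2*d12 + (2) * d02*d13*d23 + (-2) * d02*d13^2 + (2) * d02*d12*d13 + (-2) * d02*d03*d23 + (2) * d02*d03*d13 + (2) * d02*d03*d12 + (-2) * d02^2*d13 + (-2) * d01*d23^2 + (2) * d01*d13*d23 + (2) * d01*d12*d23 + (2) * d01*d03*d23 + (-2) * d01*d03*d13 + (2) * d01*d03*d12 + (2) * d01*d02*d23 + (2) * d01*d02*d13 + (-2) * d01*d02*d12 + (-2) * d01^2*d23"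

lemma dist2_coord: "(dist (x::pt) y)^2 = (x$1-y$1)^2 + (x$2-y$2)^2"
  by (simp add: dist_vec_def L2_set_def sum_2 dist_real_def)

lemma cm_poly: "cm ((x0-x1)^2+(y0-y1)^2) ((x0-x2)^2+(y0-y2)^2) ((x0-x3)^2+(y0-y3)^2)
   ((x1-x2)^2+(y1-y2)^2) ((x1-x3)^2+(y1-y3)^2) ((x2-x3)^2+(y2-y3)^2) = (0::real)"
  unfolding cm_def by algebra

lemma cm_zero: "cm ((dist (p0::pt) p1)^2) ((dist p0 p2)^2) ((dist p0 p3)^2) ((dist p1 p2)^2) ((dist p1 p3)^2) ((dist p2 p3)^2) = 0"
  unfolding dist2_coord by (rule cm_poly)

definition perm3 :: "real \<Rightarrow> real \<Rightarrow> real \<Rightarrow> real \<Rightarrow> real \<Rightarrow> real \<Rightarrow> bool" where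
"perm3 x y z a b c \<longleftrightarrow> (x=a\<and>y=b\<and>z=c) \<or> (x=a\<and>y=c\<and>z=b) \<or> (x=b\<and>y=a\<and>z=c) \<or>
   (x=b\<and>y=c\<and>z=a) \<or> (x=c\<and>y=a\<and>z=b) \<or> (x=c\<and>y=b\<and>z=a)"

definition R5 :: "real \<Rightarrow> real \<Rightarrow> real \<Rightarrow> pt \<Rightarrow> pt \<Rightarrow> pt \<Rightarrow> pt \<Rightarrow> pt \<Rightarrow> bool" where
"R5 a b c P0 P1 P2 P3 P4 \<longleftrightarrow>
   perm3 (dist P0 P1) (dist P1 P2) (dist P0 P2) a b c \<and>
   perm3 (dist P1 P2) (dist P2 P3) (dist P1 P3) a b c \<and>
   perm3 (dist P2 P3) (dist P3 P4) (dist P2 P4) a b c \<and>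
   perm3 (dist P3 P4) (dist P4 P0) (dist P3 P0) a b c \<and>
   perm3 (dist P4 P0) (dist P0 P1) (dist P4 P1) a b c"

lemma R5_rot: "R5 a b c P0 P1 P2 P3 P4 \<Longrightarrow> R5 a b c P1 P2 P3 P4 P0"
  unfolding R5_def by blast

lemma perm3_swap12: "perm3 x y z a b c \<Longrightarrow> perm3 x y z b a c"
  unfolding perm3_def by blast
lemma perm3_swap23: "perm3 x y z a b c \<Longrightarrow> perm3 x y z a c b"
  unfolding perm3_def by blast
lemma R5_swap12: "R5 a b c P0 P1 P2 P3 P4 \<Longrightarrow> R5 b a c P0 P1 P2 P3 P4"
  unfolding R5_def using perm3_swap12 by blast
lemma R5_swap23: "R5 a b c P0 P1 P2 P3 P4 \<Longrightarrow> R5 a c b P0 P1 P2 P3 P4"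
  unfolding R5_def using perm3_swap23 by blast

lemma perm3_lls: "l \<noteq> s \<Longrightarrow> perm3 x y z l l s \<longleftrightarrow> (x=l\<and>y=l\<and>z=s) \<or> (x=l\<and>y=s\<and>z=l) \<or> (x=s\<and>y=l\<and>z=l)"
  unfolding perm3_def by auto

lemma R5_E:
  assumes "R5 a b c P0 P1 P2 P3 P4"
  shows "perm3 (dist P0 P1) (dist P1 P2) (dist P0 P2) a b c"
   "perm3 (dist P1 P2) (dist P2 P3) (dist P1 P3) a b c"
   "perm3 (dist P2 P3) (dist P3 P4) (dist P2 P4) a b c"
   "perm3 (dist P3 P4) (dist P4 P0) (dist P3 P0) a b c"
   "perm3 (dist P4 P0) (dist P0 P1) (dist P4 P1) a b c"
  using assms unfolding R5_def by auto

lemma alg_S0: "cm A B B A B A = 0 \<Longrightarrow> (A + B) * (B^2 - 3 * A * B + A^2) = (0::real)"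
  unfolding cm_def by algebra
lemma alg_S1: "cm A B A A B A = 0 \<Longrightarrow> cm B B A B A A = 0 \<Longrightarrow> B^2 * (2 * A - B) = (0::real) \<and> B^2 * (3 * A - B) = 0"
  unfolding cm_def by algebra
lemma alg_S2: "cm A A A B A A = 0 \<Longrightarrow> cm A B A B A A = 0 \<Longrightarrow> A * B * (3 * A - B) = (0::real) \<and> A * (B^2 - 4 * A * B + A^2) = 0"
  unfolding cm_def by algebra
lemma alg_sc: "cm W W V W U U = 0 \<Longrightarrow> cm W V V U U W = 0 \<Longrightarrow> W^2 * (V - W) = (0::real)"
  unfolding cm_def by algebra
lemma alg_eq: "cm A A A A A A = 4 * A^3"
  unfolding cm_def by algebra

lemma core_S0:
  assumes R: "R5 l l k P0 P1 P2 P3 P4" and ne: "l \<noteq> k"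
    and x: "dist P0 P1 = l" "dist P1 P2 = l" "dist P2 P3 = l" "dist P3 P4 = l" "dist P4 P0 = l"
    and pos: "l > 0" "k > 0"
  shows "(k^2)^2 - 3 * (l^2) * (k^2) + (l^2)^2 = 0"
proof -
  have t: "perm3 l l (dist P0 P2) l l k" "perm3 l l (dist P1 P3) l l k" "perm3 l l (dist P3 P0) l l k"
    using R5_E[OF R] x by simp_all
  hence y0: "dist P0 P2 = k" and y1: "dist P1 P3 = k" and y3: "dist P3 P0 = k"
    using ne by (simp_all add: perm3_lls)
  have y3': "dist P0 P3 = k" using y3 by (simp add: dist_commute)
  have "cm (l^2) (k^2) (k^2) (l^2) (k^2) (l^2) = 0"
    using cm_zero[of P0 P1 P2 P3] x y0 y1 y3' by simp
  hence "(l^2 + k^2) * ((k^2)^2 - 3 * (l^2) * (k^2) + (l^2)^2) = 0" by (rule alg_S0)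
  moreover have "l^2 + k^2 \<noteq> 0" using pos by (smt (verit) zero_less_power)
  ultimately show ?thesis by (metis mult_eq_0_iff)
qed

lemma core_S1:
  assumes R: "R5 l l k P0 P1 P2 P3 P4" and ne: "l \<noteq> k"
    and x: "dist P0 P1 = k" "dist P1 P2 = l" "dist P2 P3 = l" "dist P3 P4 = l" "dist P4 P0 = l"
    and pos: "l > 0" "k > 0"
  shows False
proof -
  have y: "dist P0 P2 = l" "dist P1 P3 = k" "dist P2 P4 = k" "dist P3 P0 = k" "dist P4 P1 = l"
    using R5_E[OF R] x ne by (simp_all add: perm3_lls)
  have e0: "cm (l^2) (k^2) (l^2) (l^2) (k^2) (l^2) = 0"
    using cm_zero[of P1 P2 P3 P4] x y by (simp add: dist_commute)
  have e2: "cm (k^2) (k^2) (l^2) (k^2) (l^2) (l^2) = 0"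
    using cm_zero[of P0 P1 P3 P4] x y by (simp add: dist_commute)
  from alg_S1[OF e0 e2] pos have a: "2 * l^2 = k^2" and b: "3 * l^2 = k^2" by auto
  from a b have "l^2 = 0" by linarith
  with pos show False by simp
qed

lemma core_S2:
  assumes R: "R5 l l k P0 P1 P2 P3 P4" and ne: "l \<noteq> k"
    and x: "dist P0 P1 = k" "dist P1 P2 = l" "dist P2 P3 = k" "dist P3 P4 = l" "dist P4 P0 = l"
    and pos: "l > 0" "k > 0"
  shows False
proof -
  have y: "dist P0 P2 = l" "dist P1 P3 = l" "dist P2 P4 = l" "dist P3 P0 = k" "dist P4 P1 = l"
    using R5_E[OF R] x ne by (simp_all add: perm3_lls)
  have e0: "cm (l^2) (l^2) (l^2) (k^2) (l^2) (l^2) = 0"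
    using cm_zero[of P1 P2 P3 P4] x y by (simp add: dist_commute)
  have e1: "cm (l^2) (k^2) (l^2) (k^2) (l^2) (l^2) = 0"
    using cm_zero[of P0 P2 P3 P4] x y by (simp add: dist_commute)
  from alg_S2[OF e0 e1] pos have a: "k^2 = 3 * l^2" and b: "(k^2)^2 - 4 * l^2 * k^2 + (l^2)^2 = 0"
    by auto
  from b a have "(l^2)^2 = 0" by algebra
  with pos show False by simp
qed

lemma core_scal:
  assumes "dist (P0::pt) P1 = w" "dist P1 P2 = u" "dist P2 P3 = v" "dist P3 P4 = u" "dist P4 P0 = v"
   "dist P0 P2 = v" "dist P1 P3 = w" "dist P2 P4 = w" "dist P3 P0 = w" "dist P4 P1 = u"
   and "v \<noteq> w" "v > 0" "w > 0"
  shows False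
proof -
  have e2: "cm (w^2) (w^2) (v^2) (w^2) (u^2) (u^2) = 0"
    using cm_zero[of P0 P1 P3 P4] assms by (simp add: dist_commute)
  have e3: "cm (w^2) (v^2) (v^2) (u^2) (u^2) (w^2) = 0"
    using cm_zero[of P0 P1 P2 P4] assms by (simp add: dist_commute)
  from alg_sc[OF e2 e3] assms have "v^2 = w^2" by simp
  thus False using assms by (smt (verit) power2_eq_iff_nonneg)
qed

lemma core_equi:
  assumes "dist (P0::pt) P1 = a" "dist P0 P2 = a" "dist P0 P3 = a" "dist P1 P2 = a" "dist P1 P3 = a" "dist P2 P3 = a"
    and "a > 0"
  shows False
proof -
  have "cm (a^2) (a^2) (a^2) (a^2) (a^2) (a^2) = 0"
    using cm_zero[of P0 P1 P2 P3] assms by simp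
  thus False unfolding alg_eq using assms by simp
qed

lemma core_x0k:
  assumes R: "R5 l l k P0 P1 P2 P3 P4" and ne: "l \<noteq> k"
    and x0: "dist P0 P1 = k" and pos: "l > 0" "k > 0"
  shows False
proof -
  note t = R5_E[OF R]
  have x1: "dist P1 P2 = l" using t(1) x0 ne by (auto simp: perm3_lls)
  have x4: "dist P4 P0 = l" using t(5) x0 ne by (auto simp: perm3_lls)
  have x23: "(dist P2 P3 = l \<and> dist P3 P4 = l) \<or> (dist P2 P3 = l \<and> dist P3 P4 = k) \<or> (dist P2 P3 = k \<and> dist P3 P4 = l)"
    using t(3) ne by (auto simp: perm3_lls)
  then show False
  proof (elim disjE conjE)
    assume "dist P2 P3 = l" "dist P3 P4 = l"
    then show False using core_S1[OF R ne x0 x1 _ _ x4 pos] by blast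
  next
    assume "dist P2 P3 = k" "dist P3 P4 = l"
    then show False using core_S2[OF R ne x0 x1 _ _ x4 pos] by blast
  next
    assume a: "dist P2 P3 = l" "dist P3 P4 = k"
    have R': "R5 l l k P3 P4 P0 P1 P2" using R5_rot[OF R5_rot[OF R5_rot[OF R]]] .
    show False using core_S2[OF R' ne a(2) x4 x0 x1 a(1) pos] .
  qed
qed

lemma iso_main:
  assumes R: "R5 l l k P0 P1 P2 P3 P4" and ne: "l \<noteq> k" and pos: "l > 0" "k > 0"
  shows "(k^2)^2 - 3 * (l^2) * (k^2) + (l^2)^2 = 0"
proof -
  note t = R5_E[OF R]
  have R1: "R5 l l k P1 P2 P3 P4 P0" using R by (rule R5_rot)
  have R2: "R5 l l k P2 P3 P4 P0 P1" using R1 by (rule R5_rot)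
  have R3: "R5 l l k P3 P4 P0 P1 P2" using R2 by (rule R5_rot)
  have R4: "R5 l l k P4 P0 P1 P2 P3" using R3 by (rule R5_rot)
  have "dist P0 P1 \<noteq> k" using core_x0k[OF R ne _ pos] by blast
  moreover have "dist P1 P2 \<noteq> k" using core_x0k[OF R1 ne _ pos] by blast
  moreover have "dist P2 P3 \<noteq> k" using core_x0k[OF R2 ne _ pos] by blast
  moreover have "dist P3 P4 \<noteq> k" using core_x0k[OF R3 ne _ pos] by blast
  moreover have "dist P4 P0 \<noteq> k" using core_x0k[OF R4 ne _ pos] by blast
  moreover have "dist P0 P1 = l \<or> dist P0 P1 = k" using t(1) ne by (auto simp: perm3_lls)
  moreover have "dist P1 P2 = l \<or> dist P1 P2 = k" using t(2) ne by (auto simp: perm3_lls)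
  moreover have "dist P2 P3 = l \<or> dist P2 P3 = k" using t(3) ne by (auto simp: perm3_lls)
  moreover have "dist P3 P4 = l \<or> dist P3 P4 = k" using t(4) ne by (auto simp: perm3_lls)
  moreover have "dist P4 P0 = l \<or> dist P4 P0 = k" using t(5) ne by (auto simp: perm3_lls)
  ultimately have "dist P0 P1 = l" "dist P1 P2 = l" "dist P2 P3 = l" "dist P3 P4 = l" "dist P4 P0 = l"
    by auto
  then show ?thesis using core_S0[OF R ne _ _ _ _ _ pos] by blast
qed

lemma perm3_dist:
  assumes "perm3 x y z a b c" "a \<noteq> b" "b \<noteq> c" "a \<noteq> c"
  shows "x \<in> {a,b,c}" "y \<in> {a,b,c}" "z \<in> {a,b,c}" "x \<noteq> y" "y \<noteq> z" "x \<noteq> z"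
  using assms unfolding perm3_def by auto

lemma third:
  assumes "x \<in> S" "y \<in> S" "z \<in> S" "t \<in> S" "S = {a,b,c}" "x \<noteq> y" "y \<noteq> z" "x \<noteq> z" "t \<noteq> x" "t \<noteq> z"
  shows "t = y"
  using assms by auto

lemma core_unique:
  assumes R: "R5 a b c P0 P1 P2 P3 P4" and d: "a \<noteq> b" "b \<noteq> c" "a \<noteq> c"
    and pos: "a > 0" "b > 0" "c > 0"
    and u: "dist P0 P1 \<noteq> dist P2 P3" "dist P0 P1 \<noteq> dist P3 P4"
  shows False
proof -
  note t = R5_E[OF R]
  note f0 = perm3_dist[OF t(1) d] and f1 = perm3_dist[OF t(2) d] and f2 = perm3_dist[OF t(3) d]
    and f3 = perm3_dist[OF t(4) d] and f4 = perm3_dist[OF t(5) d]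
  note n = f0(4-6) f1(4-6) f2(4-6) f3(4-6) f4(4-6)
  have S: "{a,b,c} = {a,b,c}" by simp
  have x3: "dist P3 P4 = dist P1 P2"
    by (rule third[OF f0(1) f0(2) f1(2) f2(2) S f0(4) f1(4)]) (use u n in auto)
  have x4: "dist P4 P0 = dist P2 P3"
    by (rule third[OF f1(1) f1(2) f0(1) f3(2) S]) (use u n x3 in auto)
  have y0: "dist P0 P2 = dist P2 P3"
    by (rule third[OF f0(1) f1(2) f0(2) f0(3) S]) (use u n x3 in auto)
  have y1: "dist P1 P3 = dist P0 P1"
    by (rule third[OF f1(1) f0(1) f1(2) f1(3) S]) (use u n x3 in auto)
  have y2: "dist P2 P4 = dist P0 P1"
    by (rule third[OF f1(1) f0(1) f1(2) f2(3) S]) (use u n x3 in auto)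
  have y3: "dist P3 P0 = dist P0 P1"
    by (rule third[OF f1(1) f0(1) f1(2) f3(3) S]) (use u n x3 x4 in auto)
  have y4: "dist P4 P1 = dist P1 P2"
    by (rule third[OF f0(1) f1(1) f1(2) f4(3) S]) (use u n x3 x4 in auto)
  have vpos: "dist P2 P3 > 0" "dist P0 P1 > 0" using f1(2) f0(1) pos by auto
  show False
    by (rule core_scal[OF refl refl refl x3 x4 y0 y1 y2 y3 y4 _ vpos]) (use u in auto)
qed

lemma scal_main:
  assumes R: "R5 a b c P0 P1 P2 P3 P4" and d: "a \<noteq> b" "b \<noteq> c" "a \<noteq> c"
    and pos: "a > 0" "b > 0" "c > 0"
  shows False
proof -
  note t = R5_E[OF R]
  note f0 = perm3_dist[OF t(1) d] and f1 = perm3_dist[OF t(2) d] and f2 = perm3_dist[OF t(3) d]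
    and f3 = perm3_dist[OF t(4) d] and f4 = perm3_dist[OF t(5) d]
  note n = f0(4-6) f1(4-6) f2(4-6) f3(4-6) f4(4-6)
  have R1: "R5 a b c P1 P2 P3 P4 P0" using R by (rule R5_rot)
  have R2: "R5 a b c P2 P3 P4 P0 P1" using R1 by (rule R5_rot)
  have R3: "R5 a b c P3 P4 P0 P1 P2" using R2 by (rule R5_rot)
  have R4: "R5 a b c P4 P0 P1 P2 P3" using R3 by (rule R5_rot)
  note U0 = core_unique[OF R d pos] and U1 = core_unique[OF R1 d pos]
    and U2 = core_unique[OF R2 d pos] and U3 = core_unique[OF R3 d pos]
    and U4 = core_unique[OF R4 d pos]
  show False
  proof (cases "dist P0 P1 = dist P2 P3")
    case True
    show False
    proof (cases "dist P3 P4 = dist P1 P2")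
      case True
      show False by (rule U4) (use n \<open>dist P0 P1 = dist P2 P3\<close> True in auto)
    next
      case False
      show False by (rule U3) (use n \<open>dist P0 P1 = dist P2 P3\<close> False in auto)
    qed
  next
    case ne02: False
    show False
    proof (cases "dist P0 P1 = dist P3 P4")
      case True
      show False
      proof (cases "dist P4 P0 = dist P1 P2")
        case True
        show False by (rule U2) (use n \<open>dist P0 P1 = dist P3 P4\<close> True in auto)
      next
        case False
        show False by (rule U1) (use n \<open>dist P0 P1 = dist P3 P4\<close> False in auto)
      qed
    next
      case False
      show False by (rule U0) (use ne02 False in auto)
    qed
  qed
qed

lemma perm3_aaa: "perm3 x y z a a a \<Longrightarrow> x = a \<and> y = a \<and> z = a"
  unfolding perm3_def by auto

lemma exact_main:
  assumes R: "R5 a b c P0 P1 P2 P3 P4" and pos: "a > 0" "b > 0" "c > 0"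
  shows "\<exists>l k. l > 0 \<and> k > 0 \<and> l \<noteq> k \<and> (k^2)^2 - 3 * (l^2) * (k^2) + (l^2)^2 = 0 \<and>
     ((a = l \<and> b = l \<and> c = k) \<or> (a = l \<and> b = k \<and> c = l) \<or> (a = k \<and> b = l \<and> c = l))"
proof -
  consider "a = b" "b = c" | "a = b" "b \<noteq> c" | "a = c" "a \<noteq> b" | "b = c" "a \<noteq> b"
    | "a \<noteq> b" "b \<noteq> c" "a \<noteq> c" by blast
  then show ?thesis
  proof cases
    case 1
    hence R': "R5 a a a P0 P1 P2 P3 P4" using R by simp
    note t = R5_E[OF R']
    have "dist P0 P1 = a" "dist P0 P2 = a" "dist P1 P2 = a" "dist P1 P3 = a" "dist P2 P3 = a"
      using perm3_aaa[OF t(1)] perm3_aaa[OF t(2)] perm3_aaa[OF t(3)] by auto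
    moreover have "dist P0 P3 = a" using perm3_aaa[OF t(4)] by (auto simp: dist_commute)
    ultimately have False using core_equi[of P0 P1 a P2 P3] pos by auto
    thus ?thesis ..
  next
    case 2
    hence R': "R5 a a c P0 P1 P2 P3 P4" using R by simp
    show ?thesis using iso_main[OF R' _ pos(1) pos(3)] 2 pos by blast
  next
    case 3
    hence R': "R5 a a b P0 P1 P2 P3 P4" using R5_swap23[OF R] by simp
    show ?thesis using iso_main[OF R' _ pos(1) pos(2)] 3 pos by blast
  next
    case 4
    hence R': "R5 b b a P0 P1 P2 P3 P4" using R5_swap23[OF R5_swap12[OF R]] by simp
    show ?thesis using iso_main[OF R' _ pos(2) pos(1)] 4 pos by blast
  next
    case 5
    with scal_main[OF R _ _ _ pos] show ?thesis by blast
  qed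
qed

lemma aux1: "(1::real) < x \<Longrightarrow> (1 - x)/4 < 0"
  by simp
lemma aux2: "(1::real) < x \<Longrightarrow> 0 < (1 + x)/2"
  by simp
lemma aux3: "(1::real) < x \<Longrightarrow> 0 < (x - 1)/2"
  by simp

lemma cos36: "cos (pi/5) = (1 + sqrt 5) / 4"
proof -
  define c where "c = cos (pi/5)"
  have "cos (3 * (pi/5)) = - cos (2 * (pi/5))"
  proof -
    have "3 * (pi/5) = pi - 2 * (pi/5)" by simp
    thus ?thesis by (simp only: cos_pi_minus)
  qed
  moreover have "cos (3 * (pi/5)) = 4 * c^3 - 3 * c" unfolding c_def by (rule cos_treble_cos)
  moreover have "cos (2 * (pi/5)) = 2 * c^2 - 1" unfolding c_def by (rule cos_double_cos)
  ultimately have "4 * c^3 - 3 * c = - (2 * c^2 - 1)" by simp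
  hence e: "(c + 1) * (4 * c^2 - 2 * c - 1) = 0" by algebra
  have cpos: "c > 0" unfolding c_def by (rule cos_gt_zero) (use pi_gt_zero in auto)
  hence q: "4 * c^2 - 2 * c - 1 = 0" using e by simp
  have s5: "sqrt 5 ^ 2 = 5" by simp
  define A where "A = (1 + sqrt 5)/4"
  define B where "B = (1 - sqrt 5)/4"
  have fa: "4 * c^2 - 2 * c - 1 = 4 * ((c - A) * (c - B))"
    unfolding A_def B_def using s5 by (simp add: field_simps power2_eq_square algebra_simps)
  have "1 < sqrt 5" by (simp add: real_less_rsqrt)
  hence "B < 0" unfolding B_def using aux1 by blast
  hence "c - B \<noteq> 0" using cpos by linarith
  moreover have "(c - A) * (c - B) = 0" using fa q by linarith
  ultimately have "c = A" by simp
  thus ?thesis unfolding c_def A_def .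
qed

lemma cos72: "cos (2 * pi/5) = (sqrt 5 - 1) / 4"
proof -
  have "cos (2 * (pi/5)) = 2 * cos (pi/5)^2 - 1" by (rule cos_double_cos)
  also have "\<dots> = (sqrt 5 - 1) / 4" unfolding cos36 by (simp add: power2_eq_square algebra_simps)
  finally show ?thesis by simp
qed

lemma cos108: "cos (3 * pi/5) = (1 - sqrt 5) / 4"
proof -
  have "3 * pi/5 = pi - 2 * pi/5" by simp
  hence "cos (3 * pi/5) = - cos (2 * pi/5)" by (simp only: cos_pi_minus)
  thus ?thesis unfolding cos72 by (simp add: field_simps)
qed

lemma arccos36: "arccos ((1 + sqrt 5) / 4) * 180 / pi = 36"
proof -
  have "arccos (cos (pi/5)) = pi/5" by (rule arccos_cos) (use pi_gt_zero in auto)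
  hence h: "arccos ((1 + sqrt 5) / 4) = pi/5" unfolding cos36 .
  show ?thesis unfolding h by simp
qed

lemma arccos72: "arccos ((sqrt 5 - 1) / 4) * 180 / pi = 72"
proof -
  have "arccos (cos (2*pi/5)) = 2*pi/5" by (rule arccos_cos) (use pi_gt_zero in auto)
  hence h: "arccos ((sqrt 5 - 1) / 4) = 2*pi/5" unfolding cos72 .
  show ?thesis unfolding h by simp
qed

lemma arccos108: "arccos ((1 - sqrt 5) / 4) * 180 / pi = 108"
proof -
  have "arccos (cos (3*pi/5)) = 3*pi/5" by (rule arccos_cos) (use pi_gt_zero in auto)
  hence h: "arccos ((1 - sqrt 5) / 4) = 3*pi/5" unfolding cos108 .
  show ?thesis unfolding h by simp
qed

definition ang :: "real \<Rightarrow> real \<Rightarrow> real \<Rightarrow> real" where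
  "ang p q r = arccos ((p^2 + q^2 - r^2) / (2 * p * q)) * 180 / pi"

lemma norm_diff_sq: "norm (u - v)^2 = norm u ^2 + norm v ^2 - 2 * (u \<bullet> (v::pt))"
  by (simp add: power2_norm_eq_inner inner_diff_left inner_diff_right inner_commute)

lemma angle_ang: "angle_deg X Y Z = ang (dist X Y) (dist Z Y) (dist X Z)"
proof -
  have "X - Z = (X - Y) - (Z - Y)" by simp
  hence "dist X Z ^2 = dist X Y ^2 + dist Z Y ^2 - 2 * ((X - Y) \<bullet> (Z - Y))"
    unfolding dist_norm by (metis norm_diff_sq)
  hence h: "(X - Y) \<bullet> (Z - Y) = (norm (X - Y) ^2 + norm (Z - Y) ^2 - norm (X - Z) ^2) / 2"
    unfolding dist_norm by simp
  show ?thesis unfolding angle_deg_def ang_def dist_norm h by (simp add: divide_divide_eq_left mult.assoc)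
qed

definition phi :: real where "phi = (1 + sqrt 5) / 2"
definition psi :: real where "psi = (sqrt 5 - 1) / 2"

lemma s5: "sqrt 5 ^ 2 = (5::real)" by simp

lemma golden_fact:
  assumes "(q::real)^2 = 5"
  shows "(k - (1 + q) / 2 * l) * (k + (1 + q) / 2 * l) * (k - (q - 1) / 2 * l) * (k + (q - 1) / 2 * l) = (k^2)^2 - 3 * (l^2) * (k^2) + (l^2)^2"
proof -
  have a: "(k - (1 + q) / 2 * l) * (k + (1 + q) / 2 * l) = k^2 - (3 + q)/2 * l^2"
    using assms by (simp add: field_simps power2_eq_square algebra_simps)
  have b: "(k - (q - 1) / 2 * l) * (k + (q - 1) / 2 * l) = k^2 - (3 - q)/2 * l^2"
    using assms by (simp add: field_simps power2_eq_square algebra_simps)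
  have "(k^2 - (3 + q)/2 * l^2) * (k^2 - (3 - q)/2 * l^2) = (k^2)^2 - 3 * (l^2) * (k^2) + (l^2)^2"
    using assms by (simp add: field_simps power2_eq_square algebra_simps)
  with a b show ?thesis by (metis mult.assoc)
qed

lemma sqrt5_gt1: "1 < sqrt (5::real)" by (simp add: real_less_rsqrt)

lemma phi_pos: "phi > 0"
  unfolding phi_def using aux2[OF sqrt5_gt1] .
lemma psi_pos: "psi > 0"
  unfolding psi_def using aux3[OF sqrt5_gt1] .

lemma golden_cases:
  assumes "(k^2)^2 - 3 * (l^2) * (k^2) + (l^2)^2 = 0" "l > 0" "k > 0"
  shows "k = phi * l \<or> k = psi * l"
proof -
  have "(k - phi * l) * (k + phi * l) * (k - psi * l) * (k + psi * l) = (k^2)^2 - 3 * (l^2) * (k^2) + (l^2)^2"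
    unfolding phi_def psi_def by (rule golden_fact[OF s5])
  hence z: "(k - phi * l) * (k + phi * l) * (k - psi * l) * (k + psi * l) = 0" using assms by simp
  have "k + phi * l > 0" "k + psi * l > 0" using assms phi_pos psi_pos by (auto intro!: add_pos_pos mult_pos_pos)
  with z show ?thesis by auto
qed

lemma phi2: "phi^2 = (3 + sqrt 5)/2"
  unfolding phi_def using s5 by (simp add: field_simps power2_eq_square algebra_simps)
lemma psi2: "psi^2 = (3 - sqrt 5)/2"
  unfolding psi_def using s5 by (simp add: field_simps power2_eq_square algebra_simps)

lemma ang_apex: assumes "l > 0" shows "ang l l (c * l) = arccos ((2 - c^2) / 2) * 180 / pi"
proof -
  have "(l^2 + l^2 - (c * l)^2) / (2 * l * l) = (2 - c^2) / 2"
    using assms by (simp add: field_simps power2_eq_square)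
  then show ?thesis unfolding ang_def by (simp only:)
qed
lemma ang_base1: assumes "l > 0" "c > 0" shows "ang l (c * l) l = arccos (c / 2) * 180 / pi"
proof -
  have "(l^2 + (c * l)^2 - l^2) / (2 * l * (c * l)) = c / 2"
    using assms by (simp add: field_simps power2_eq_square)
  then show ?thesis unfolding ang_def by (simp only:)
qed
lemma ang_base2: assumes "l > 0" "c > 0" shows "ang (c * l) l l = arccos (c / 2) * 180 / pi"
proof -
  have "((c * l)^2 + l^2 - l^2) / (2 * (c * l) * l) = c / 2"
    using assms by (simp add: field_simps power2_eq_square)
  then show ?thesis unfolding ang_def by (simp only:)
qed

lemma ang_vals_phi: "l > 0 \<Longrightarrow> ang l l (phi * l) = 108 \<and> ang l (phi * l) l = 36 \<and> ang (phi * l) l l = 36"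
proof -
  assume l: "l > 0"
  have e1: "(2 - phi^2) / 2 = (1 - sqrt 5)/4" unfolding phi2 by (simp add: field_simps)
  have e2: "phi / 2 = (1 + sqrt 5)/4" unfolding phi_def by simp
  show ?thesis unfolding ang_apex[OF l] ang_base1[OF l phi_pos] ang_base2[OF l phi_pos] e1 e2 arccos108 arccos36 by simp
qed

lemma ang_vals_psi: "l > 0 \<Longrightarrow> ang l l (psi * l) = 36 \<and> ang l (psi * l) l = 72 \<and> ang (psi * l) l l = 72"
proof -
  assume l: "l > 0"
  have e1: "(2 - psi^2) / 2 = (1 + sqrt 5)/4" unfolding psi2 by (simp add: field_simps)
  have e2: "psi / 2 = (sqrt 5 - 1)/4" unfolding psi_def by simp
  show ?thesis unfolding ang_apex[OF l] ang_base1[OF l psi_pos] ang_base2[OF l psi_pos] e1 e2 arccos36 arccos72 by simp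
qed

lemma tri_type_ang: "tri_type (TA, TB, TC) x y z \<longleftrightarrow>
   {# ang (dist TB TC) (dist TC TA) (dist TA TB) ,
      ang (dist TC TA) (dist TA TB) (dist TB TC), ang (dist TA TB) (dist TB TC) (dist TC TA) #} = {#x, y, z#}"
  unfolding tri_type_def angle_ang by (simp add: dist_commute add_mset_commute)

lemma golden_type:
  assumes pos: "l > 0" "k > 0" and g: "(k^2)^2 - 3 * (l^2) * (k^2) + (l^2)^2 = 0"
    and pl: "(a = l \<and> b = l \<and> c = k) \<or> (a = l \<and> b = k \<and> c = l) \<or> (a = k \<and> b = l \<and> c = l)"
    and d: "dist TB TC = a" "dist TC TA = b" "dist TA TB = c"
  shows "tri_type (TA, TB, TC) 108 36 36 \<or> tri_type (TA, TB, TC) 72 72 36"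
proof -
  have tt: "tri_type (TA, TB, TC) x y z \<longleftrightarrow> {# ang a b c, ang b c a, ang c a b #} = {#x, y, z#}" for x y z
    unfolding tri_type_ang d ..
  from golden_cases[OF g pos] show ?thesis
  proof
    assume k: "k = phi * l"
    have "tri_type (TA, TB, TC) 108 36 36" unfolding tt using pl ang_vals_phi[OF pos(1)] unfolding k
      by (auto simp: add_mset_commute)
    thus ?thesis ..
  next
    assume k: "k = psi * l"
    have "tri_type (TA, TB, TC) 72 72 36" unfolding tt using pl ang_vals_psi[OF pos(1)] unfolding k
      by (auto simp: add_mset_commute)
    thus ?thesis ..
  qed
qed

definition dev3 :: "real \<Rightarrow> real \<Rightarrow> real \<Rightarrow> pt \<Rightarrow> pt \<Rightarrow> pt \<Rightarrow> real" where
  "dev3 a b c u v w = max \<bar>dist u v - c\<bar> (max \<bar>dist v w - a\<bar> \<bar>dist w u - b\<bar>)"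

definition G :: "real \<Rightarrow> real \<Rightarrow> real \<Rightarrow> pt \<Rightarrow> pt \<Rightarrow> pt \<Rightarrow> real" where
  "G a b c u v w = min (dev3 a b c u v w) (min (dev3 a b c u w v) (min (dev3 a b c v u w)
      (min (dev3 a b c v w u) (min (dev3 a b c w u v) (dev3 a b c w v u)))))"

lemma G_swap12: "G a b c u v w = G a b c v u w"
  unfolding G_def by (simp add: min.commute min.left_commute min.assoc)
lemma G_swap23: "G a b c u v w = G a b c u w v"
  unfolding G_def by (simp add: min.commute min.left_commute min.assoc)

lemma G_le: "G a b c u v w \<le> dev3 a b c u v w" "G a b c u v w \<le> dev3 a b c u w v"
  "G a b c u v w \<le> dev3 a b c v u w" "G a b c u v w \<le> dev3 a b c v w u"
  "G a b c u v w \<le> dev3 a b c w u v" "G a b c u v w \<le> dev3 a b c w v u"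
  unfolding G_def by (simp_all add: min_le_iff_disj)

lemma dist_diff_le: "\<bar>dist u v - dist P Q\<bar> \<le> dist u P + dist v Q"
proof -
  have "dist u v \<le> dist u P + dist P Q + dist Q v"
    by (metis add.commute add_le_cancel_left dist_triangle order_trans)
  moreover have "dist P Q \<le> dist P u + dist u v + dist v Q"
    by (metis add.commute add_le_cancel_left dist_triangle order_trans)
  ultimately show ?thesis by (simp add: dist_commute abs_le_iff)
qed

lemma dev_bound:
  assumes "dist u P \<le> \<delta>" "dist v Q \<le> \<delta>" "dist w R \<le> \<delta>"
    "dist P Q = c" "dist Q R = a" "dist R P = b"
  shows "dev3 a b c u v w \<le> 2 * \<delta>"
proof -
  have "\<bar>dist u v - c\<bar> \<le> 2 * \<delta>" using dist_diff_le[of u v P Q] assms by linarith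
  moreover have "\<bar>dist v w - a\<bar> \<le> 2 * \<delta>" using dist_diff_le[of v w Q R] assms by linarith
  moreover have "\<bar>dist w u - b\<bar> \<le> 2 * \<delta>" using dist_diff_le[of w u R P] assms by linarith
  ultimately show ?thesis unfolding dev3_def by simp
qed

lemma set3_cases:
  assumes "{P, Q, R} = {A, B, C}" "P \<noteq> Q" "Q \<noteq> R" "P \<noteq> R"
  shows "(A = P \<and> B = Q \<and> C = R) \<or> (A = P \<and> B = R \<and> C = Q) \<or> (A = Q \<and> B = P \<and> C = R) \<or>
         (A = Q \<and> B = R \<and> C = P) \<or> (A = R \<and> B = P \<and> C = Q) \<or> (A = R \<and> B = Q \<and> C = P)"
proof -
  have m: "A \<in> {P,Q,R}" "B \<in> {P,Q,R}" "C \<in> {P,Q,R}" "P \<in> {A,B,C}" "Q \<in> {A,B,C}" "R \<in> {A,B,C}"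
    using assms(1) by blast+
  thus ?thesis using assms(2-4) by auto
qed


lemma eps_G:
  assumes ec: "eps_congruent (TA, TB, TC) \<epsilon> x y z"
    and pos: "dist TB TC > 0" "dist TC TA > 0" "dist TA TB > 0"
  shows "G (dist TB TC) (dist TC TA) (dist TA TB) x y z \<le> 2 * (\<epsilon> * min_side (TA, TB, TC))"
proof -
  define \<delta> where "\<delta> = \<epsilon> * min_side (TA, TB, TC)"
  obtain A B C where cg: "congruent A B C (TA, TB, TC)" and dA: "dist x A \<le> \<delta>"
    and dB: "dist y B \<le> \<delta>" and dC: "dist z C \<le> \<delta>"
    using ec unfolding eps_congruent_def \<delta>_def by blast
  obtain f :: "pt \<Rightarrow> pt" where iso: "\<And>u v. dist (f u) (f v) = dist u v"
    and fs: "{f TA, f TB, f TC} = {A, B, C}"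
    using cg unfolding congruent_def by auto
  define P where "P = f TA"
  define Q where "Q = f TB"
  define R where "R = f TC"
  have dPQ: "dist P Q = dist TA TB" and dQR: "dist Q R = dist TB TC" and dRP: "dist R P = dist TC TA"
    unfolding P_def Q_def R_def by (simp_all add: iso)
  have ne: "P \<noteq> Q" "Q \<noteq> R" "P \<noteq> R"
    using dPQ dQR dRP pos by (auto simp: dist_commute)
  have fs': "{P, Q, R} = {A, B, C}" using fs unfolding P_def Q_def R_def .
  note cs = set3_cases[OF fs' ne]
  let ?a = "dist TB TC" and ?b = "dist TC TA" and ?c = "dist TA TB"
  from cs have "G ?a ?b ?c x y z \<le> 2 * \<delta>"
  proof (elim disjE conjE)
    assume "A = P" "B = Q" "C = R"
    hence "dev3 ?a ?b ?c x y z \<le> 2 * \<delta>" using dev_bound[of x P \<delta> y Q z R] dA dB dC dPQ dQR dRP by simp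
    thus ?thesis using G_le(1)[of ?a ?b ?c x y z] by linarith
  next
    assume "A = P" "B = R" "C = Q"
    hence "dev3 ?a ?b ?c x z y \<le> 2 * \<delta>" using dev_bound[of x P \<delta> z Q y R] dA dB dC dPQ dQR dRP by simp
    thus ?thesis using G_le(2)[of ?a ?b ?c x y z] by linarith
  next
    assume "A = Q" "B = P" "C = R"
    hence "dev3 ?a ?b ?c y x z \<le> 2 * \<delta>" using dev_bound[of y P \<delta> x Q z R] dA dB dC dPQ dQR dRP by simp
    thus ?thesis using G_le(3)[of ?a ?b ?c x y z] by linarith
  next
    assume "A = Q" "B = R" "C = P"
    hence "dev3 ?a ?b ?c z x y \<le> 2 * \<delta>" using dev_bound[of z P \<delta> x Q y R] dA dB dC dPQ dQR dRP by simp
    thus ?thesis using G_le(5)[of ?a ?b ?c x y z] by linarith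
  next
    assume "A = R" "B = P" "C = Q"
    hence "dev3 ?a ?b ?c y z x \<le> 2 * \<delta>" using dev_bound[of y P \<delta> z Q x R] dA dB dC dPQ dQR dRP by simp
    thus ?thesis using G_le(4)[of ?a ?b ?c x y z] by linarith
  next
    assume "A = R" "B = Q" "C = P"
    hence "dev3 ?a ?b ?c z y x \<le> 2 * \<delta>" using dev_bound[of z P \<delta> y Q x R] dA dB dC dPQ dQR dRP by simp
    thus ?thesis using G_le(6)[of ?a ?b ?c x y z] by linarith
  qed
  thus ?thesis unfolding \<delta>_def .
qed

lemma dev3_zero: "dev3 a b c u v w \<le> 0 \<Longrightarrow> dist u v = c \<and> dist v w = a \<and> dist w u = b"
  unfolding dev3_def by auto

lemma G_zero:
  assumes "G a b c u v w \<le> 0"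
  shows "perm3 (dist u v) (dist v w) (dist u w) a b c"
proof -
  have "dev3 a b c u v w \<le> 0 \<or> dev3 a b c u w v \<le> 0 \<or> dev3 a b c v u w \<le> 0 \<or>
        dev3 a b c v w u \<le> 0 \<or> dev3 a b c w u v \<le> 0 \<or> dev3 a b c w v u \<le> 0"
    using assms unfolding G_def by (simp add: min_le_iff_disj)
  thus ?thesis
  proof (elim disjE)
    assume "dev3 a b c u v w \<le> 0"
    hence h: "dist u v = c" "dist v w = a" "dist w u = b" using dev3_zero by blast+
    show ?thesis unfolding perm3_def using h by (simp add: dist_commute)
  next
    assume "dev3 a b c u w v \<le> 0"
    hence h: "dist u w = c" "dist w v = a" "dist v u = b" using dev3_zero by blast+
    show ?thesis unfolding perm3_def using h by (simp add: dist_commute)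
  next
    assume "dev3 a b c v u w \<le> 0"
    hence h: "dist v u = c" "dist u w = a" "dist w v = b" using dev3_zero by blast+
    show ?thesis unfolding perm3_def using h by (simp add: dist_commute)
  next
    assume "dev3 a b c v w u \<le> 0"
    hence h: "dist v w = c" "dist w u = a" "dist u v = b" using dev3_zero by blast+
    show ?thesis unfolding perm3_def using h by (simp add: dist_commute)
  next
    assume "dev3 a b c w u v \<le> 0"
    hence h: "dist w u = c" "dist u v = a" "dist v w = b" using dev3_zero by blast+
    show ?thesis unfolding perm3_def using h by (simp add: dist_commute)
  next
    assume "dev3 a b c w v u \<le> 0"
    hence h: "dist w v = c" "dist v u = a" "dist u w = b" using dev3_zero by blast+
    show ?thesis unfolding perm3_def using h by (simp add: dist_commute)
  qed
qed

lemma G_bounded: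
  assumes "G a b c u v w \<le> \<delta>" "a \<ge> 0" "b \<ge> 0" "c \<ge> 0"
  shows "dist u v \<le> a + b + c + \<delta>" "dist v w \<le> a + b + c + \<delta>" "dist u w \<le> a + b + c + \<delta>"
proof -
  have "dev3 a b c u v w \<le> \<delta> \<or> dev3 a b c u w v \<le> \<delta> \<or> dev3 a b c v u w \<le> \<delta> \<or>
        dev3 a b c v w u \<le> \<delta> \<or> dev3 a b c w u v \<le> \<delta> \<or> dev3 a b c w v u \<le> \<delta>"
    using assms unfolding G_def by (simp add: min_le_iff_disj)
  hence h: "dist u v \<le> a + b + c + \<delta> \<and> dist v w \<le> a + b + c + \<delta> \<and> dist u w \<le> a + b + c + \<delta>"
    using assms(2-4) unfolding dev3_def
    by (elim disjE; simp add: abs_le_iff dist_commute; linarith)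
  show "dist u v \<le> a + b + c + \<delta>" "dist v w \<le> a + b + c + \<delta>" "dist u w \<le> a + b + c + \<delta>"
    using h by auto
qed

lemma dist_transl: "dist (u - t) (v - t) = dist u (v::pt)"
  by (simp add: dist_norm)

lemma G_transl: "G a b c (u - t) (v - t) (w - t) = G a b c u v w"
  unfolding G_def dev3_def dist_transl ..

lemma G_cont:
  assumes "continuous_on S f" "continuous_on S g" "continuous_on S h"
  shows "continuous_on S (\<lambda>x. G a b c (f x) (g x) (h x))"
  unfolding G_def dev3_def using assms by (intro continuous_intros)


lemma edge_G:
  assumes e: "{x1, x2, x3} \<in> HTP (TA, TB, TC) P \<epsilon>" and d: "x1 \<noteq> x2" "x2 \<noteq> x3" "x1 \<noteq> x3"
    and pos: "dist TB TC > 0" "dist TC TA > 0" "dist TA TB > 0"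
  shows "G (dist TB TC) (dist TC TA) (dist TA TB) x1 x2 x3 \<le> 2 * (\<epsilon> * min_side (TA, TB, TC))"
proof -
  let ?a = "dist TB TC" and ?b = "dist TC TA" and ?c = "dist TA TB"
  obtain x y z where s: "{x1, x2, x3} = {x, y, z}" and ec: "eps_congruent (TA, TB, TC) \<epsilon> x y z"
    using e unfolding HTP_def by blast
  have b: "G ?a ?b ?c x y z \<le> 2 * (\<epsilon> * min_side (TA, TB, TC))" by (rule eps_G[OF ec pos])
  have sym: "G ?a ?b ?c x1 x2 x3 = G ?a ?b ?c x y z"
    using set3_cases[OF s d(1) d(2) d(3)]
    by (elim disjE conjE; simp; metis G_swap12 G_swap23)
  show ?thesis using b sym by simp
qed

theorem lemma2p10:
  fixes T :: triangle
  assumes "is_triangle T"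
    and "\<not> tri_type T 108 36 36"
    and "\<not> tri_type T 72 72 36"
    and "\<not> tri_type T 120 30 30"
  shows "forbidden_for C5_vertices C5_edges T"
proof -
  obtain TA TB TC where T: "T = (TA, TB, TC)" by (cases T) auto
  have nc: "\<not> collinear {TA, TB, TC}" using assms(1) T by (simp add: is_triangle_def)
  have n1: "TA \<noteq> TB" using nc collinear_2 by (metis insert_absorb2)
  have n2: "TB \<noteq> TC" using nc collinear_2 by (metis insert_absorb2 insert_commute)
  have n3: "TC \<noteq> TA" using nc collinear_2 by (metis insert_absorb2 insert_commute)
  define a where "a = dist TB TC"
  define b where "b = dist TC TA"
  define c where "c = dist TA TB"
  have pos: "a > 0" "b > 0" "c > 0" unfolding a_def b_def c_def using n1 n2 n3 by auto
  define m where "m = min_side T"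
  have m_eq: "m = min a (min b c)" unfolding m_def T min_side_def a_def b_def c_def by simp
  have mpos: "m > 0" using pos m_eq by simp
  define R0 where "R0 = a + b + c + 2 * m"
  have R0pos: "R0 \<ge> 0" unfolding R0_def using pos mpos by simp
  define K :: "(pt \<times> pt \<times> pt \<times> pt) set"
    where "K = cball 0 R0 \<times> (cball 0 R0 \<times> (cball 0 R0 \<times> cball 0 R0))"
  define F :: "pt \<times> pt \<times> pt \<times> pt \<Rightarrow> real" where
    "F = (\<lambda>q. max (G a b c 0 (fst q) (fst (snd q)))
           (max (G a b c (fst q) (fst (snd q)) (fst (snd (snd q))))
           (max (G a b c (fst (snd q)) (fst (snd (snd q))) (snd (snd (snd q))))
           (max (G a b c 0 (fst (snd (snd q))) (snd (snd (snd q))))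
                (G a b c 0 (fst q) (snd (snd (snd q))))))))"
  have Kc: "compact K" unfolding K_def by (intro compact_Times compact_cball)
  have Kne: "K \<noteq> {}" unfolding K_def using R0pos by auto
  have Fc: "continuous_on K F" unfolding F_def
    by (intro continuous_intros G_cont)
  obtain q0 where q0K: "q0 \<in> K" and q0min: "\<And>q. q \<in> K \<Longrightarrow> F q0 \<le> F q"
    using continuous_attains_inf[OF Kc Kne Fc] by blast
  have Fpos: "F q0 > 0"
  proof (rule ccontr)
    assume "\<not> F q0 > 0"
    hence F0: "F q0 \<le> 0" by simp
    define P0 :: pt where "P0 = 0"
    define P1 where "P1 = fst q0"
    define P2 where "P2 = fst (snd q0)"
    define P3 where "P3 = fst (snd (snd q0))"
    define P4 where "P4 = snd (snd (snd q0))"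
    have g: "G a b c P0 P1 P2 \<le> 0" "G a b c P1 P2 P3 \<le> 0" "G a b c P2 P3 P4 \<le> 0"
      "G a b c P0 P3 P4 \<le> 0" "G a b c P0 P1 P4 \<le> 0"
      using F0 unfolding F_def P0_def P1_def P2_def P3_def P4_def by simp_all
    have g4: "G a b c P3 P4 P0 \<le> 0" using g(4) by (metis G_swap12 G_swap23)
    have g5: "G a b c P4 P0 P1 \<le> 0" using g(5) by (metis G_swap12 G_swap23)
    have R: "R5 a b c P0 P1 P2 P3 P4"
      unfolding R5_def using G_zero[OF g(1)] G_zero[OF g(2)] G_zero[OF g(3)] G_zero[OF g4] G_zero[OF g5]
      by blast
    obtain l k where lk: "l > 0" "k > 0" "(k^2)^2 - 3 * (l^2) * (k^2) + (l^2)^2 = 0"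
      "(a = l \<and> b = l \<and> c = k) \<or> (a = l \<and> b = k \<and> c = l) \<or> (a = k \<and> b = l \<and> c = l)"
      using exact_main[OF R pos] by blast
    have "tri_type (TA, TB, TC) 108 36 36 \<or> tri_type (TA, TB, TC) 72 72 36"
      by (rule golden_type[OF lk(1) lk(2) lk(3) lk(4)]) (simp_all add: a_def b_def c_def)
    thus False using assms(2,3) T by simp
  qed
  define \<epsilon> where "\<epsilon> = min 1 (F q0 / (4 * m))"
  have epos: "\<epsilon> > 0" unfolding \<epsilon>_def using Fpos mpos by simp
  have e1: "\<epsilon> \<le> 1" unfolding \<epsilon>_def by simp
  have e2: "2 * (\<epsilon> * m) < F q0"
  proof -
    have "\<epsilon> \<le> F q0 / (4 * m)" unfolding \<epsilon>_def by simp
    hence "\<epsilon> * m \<le> F q0 / 4" using mpos by (simp add: field_simps)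
    thus ?thesis using Fpos by simp
  qed
  show ?thesis
    unfolding forbidden_for_def
  proof (intro exI[of _ \<epsilon>] conjI allI impI epos notI)
    fix P :: "pt set"
    assume "finite P \<and> card P = card C5_vertices"
    assume "contains_copy C5_vertices C5_edges P (HTP T P \<epsilon>)"
    then obtain f where inj: "inj_on f C5_vertices"
      and ed: "\<forall>e\<in>C5_edges. f ` e \<in> HTP T P \<epsilon>"
      unfolding contains_copy_def by blast
    define p1 where "p1 = f 1"
    define p2 where "p2 = f 2"
    define p3 where "p3 = f 3"
    define p4 where "p4 = f 4"
    define p5 where "p5 = f 5"
    have dis: "p1 \<noteq> p2" "p1 \<noteq> p3" "p1 \<noteq> p4" "p1 \<noteq> p5" "p2 \<noteq> p3" "p2 \<noteq> p4" "p2 \<noteq> p5"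
      "p3 \<noteq> p4" "p3 \<noteq> p5" "p4 \<noteq> p5"
      using inj unfolding p1_def p2_def p3_def p4_def p5_def C5_vertices_def inj_on_def by auto
    have E: "{p1, p2, p3} \<in> HTP (TA, TB, TC) P \<epsilon>" "{p2, p3, p4} \<in> HTP (TA, TB, TC) P \<epsilon>"
      "{p3, p4, p5} \<in> HTP (TA, TB, TC) P \<epsilon>" "{p1, p4, p5} \<in> HTP (TA, TB, TC) P \<epsilon>"
      "{p1, p2, p5} \<in> HTP (TA, TB, TC) P \<epsilon>"
      using ed unfolding C5_edges_def p1_def p2_def p3_def p4_def p5_def T by auto
    have pos': "dist TB TC > 0" "dist TC TA > 0" "dist TA TB > 0" using pos unfolding a_def b_def c_def .
    have ms: "min_side (TA, TB, TC) = m" unfolding m_def T ..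
    note EG = edge_G[OF _ _ _ _ pos', unfolded ms a_def[symmetric] b_def[symmetric] c_def[symmetric]]
    have G1: "G a b c p1 p2 p3 \<le> 2 * (\<epsilon> * m)" by (rule EG[OF E(1)]) (use dis in auto)
    have G2: "G a b c p2 p3 p4 \<le> 2 * (\<epsilon> * m)" by (rule EG[OF E(2)]) (use dis in auto)
    have G3: "G a b c p3 p4 p5 \<le> 2 * (\<epsilon> * m)" by (rule EG[OF E(3)]) (use dis in auto)
    have G4: "G a b c p1 p4 p5 \<le> 2 * (\<epsilon> * m)" by (rule EG[OF E(4)]) (use dis in auto)
    have G5: "G a b c p1 p2 p5 \<le> 2 * (\<epsilon> * m)" by (rule EG[OF E(5)]) (use dis in auto)
    define q where "q = (p2 - p1, p3 - p1, p4 - p1, p5 - p1)"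
    have tr: "G a b c 0 (u - p1) (v - p1) = G a b c p1 u v" for u v
      using G_transl[of a b c p1 p1 u v] by simp
    have tr2: "G a b c (u - p1) (v - p1) (w - p1) = G a b c u v w" for u v w
      by (rule G_transl)
    have Fq: "F q \<le> 2 * (\<epsilon> * m)"
      unfolding F_def q_def using G1 G2 G3 G4 G5 by (simp add: tr tr2)
    have bnd: "2 * (\<epsilon> * m) \<le> 2 * m" using e1 mpos by simp
    have abc: "a \<ge> 0" "b \<ge> 0" "c \<ge> 0" using pos by auto
    have d2: "dist p1 p2 \<le> R0" using G_bounded(1)[OF G1 abc] bnd unfolding R0_def by linarith
    have d3: "dist p1 p3 \<le> R0" using G_bounded(3)[OF G1 abc] bnd unfolding R0_def by linarith
    have d4: "dist p1 p4 \<le> R0" using G_bounded(1)[OF G4 abc] bnd unfolding R0_def by linarith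
    have d5: "dist p1 p5 \<le> R0" using G_bounded(3)[OF G4 abc] bnd unfolding R0_def by linarith
    have qK: "q \<in> K" unfolding K_def q_def using d2 d3 d4 d5
      by (simp add: dist_norm norm_minus_commute)
    have "F q0 \<le> F q" by (rule q0min[OF qK])
    with Fq e2 show False by linarith
  qed
qed

end
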